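(* Let $(D,D_{t'})$ be a proper pair (in the sense allowing contemporaneous effects, with $D$ a tailed directed graph on $V\cup W$ and $t'\geq 1$) and assume the $d$-separation Markov property holds in $D_{t'}$ for the time series with baseline variables $X$ with index sets $(V,W)$. Let $A,C\subseteq V\cup W$ and $B\subseteq V$ be pairwise disjoint. If $A\cap \mathrm{an}_\bullet(B)=\emptyset$ and $(\mathrm{an}^V_\bullet(B)\cap C)\cup B$ is $\delta$-separated from $A$ given $C\setminus \mathrm{an}^V_\bullet(B)$ in $D$, then $X^B$ is locally independent of $X^A$ given $X^C$ until time $t'$.
   Context: Time series with baseline variables: $V$, $W$ finite disjoint index sets; $X=\{X_t\}_{t\ge0}$ with $X_0$ a random vector indexed by $V\cup W$ and $X_t$ ($t\ge1$) indexed by $V$. $X_t^A$ is the subvector indexed by $A$; $\overline X_t^A=\{X_s^i:i\in A,s\le t\}$ (baseline variables only at $s=0$). Local independence: for pairwise disjoint $A,B,C\subseteq V\cup W$ with $B\subseteq V$, $X^B$ is locally independent of $X^A$ given $X^C$ until time $t'$ if for every $t=1,\dots,t'$, $\overline X^A_{t-1}$ and $X_t^B$ are conditionally independent given $\overline X^{B\cup C}_{t-1}$. Tailed directed graph: a graph on $V\cup W$ with directed edges $i\to j$ and tailed directed edges $i\bullet\!\!\to j$; $i\ast\!\!\to j$ means $i\to j$ or $i\bullet\!\!\to j$ (if $i\bullet\!\!\to j$ is present, $i\to j$ is omitted). Only baseline nodes have edges into baseline nodes, and these are tailed. $D^-$ is the DG with $i\to j$ iff $i\ast\!\!\to j$ in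 $D$. $\mathrm{an}_\bullet(B)$: nodes $k$ with a directed path $k\bullet\!\!\to\cdots\bullet\!\!\to j$, $j\in B$, of tailed edges only; $\mathrm{de}_\bullet(B)$: nodes reachable from $B$ by such paths; $\mathrm{pa}_\bullet(B)$: nodes $k$ with $k\bullet\!\!\to j$, $j\in B$; by convention these three sets exclude $B$. $\mathrm{an}^V_\bullet(B)=\mathrm{an}_\bullet(B)\cap V$. DG terminology: path = walk without repeated nodes; collider = non-endpoint node with both adjacent edges pointing into it; $\mathrm{an}(C)$ = nodes with a directed path to $C$ (excluding the endpoint itself), $\mathrm{an}^+(C)=\mathrm{an}(C)\cup C$. $\delta$-separation in a DG $G$: with $G^B$ obtained by deleting all edges $i\to j$ with $i\in B$, $B$ is $\delta$-separated from $A$ given $C$ if every path in $G^B$ between $A$ and $B$ contains a noncollider in $C$ or a collider not in $\mathrm{an}_G(C)\cup C$. In a tailed directed graph $D$, $\delta$-separation means $\delta$-separation in $D^-$. $d$-separation in a DAG: same condition on paths of the DAG, no deletion. Unrolling (contemporaneous): the unrolled version of tailed directed graph $D$ on $t'$ lags is the DAG $D_{t'}$ on $V^{t'}\cup W^{t'}$, $V^{t'}=\bigcup_{i\in V}\{\nu_0^i,\dots,\nu^i_{t'}\}$, $W^{t'}=\{\nu_0^i:i\in W\}$, with $\nu_s^i\to\nu_t^j$ if $s<t$ and $i\ast\!\!\to j$, and $\nu_t^i\to\nu_t^j$ if $i\bullet\!\!\to j$. Rolling: the rolled version of a DAG $D_{t'}$ on such nodes is the tailed directed graph with $i\ast\!\!\to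 j$ if $\nu_s^i\to\nu_t^j$ for some $s\le t$, and $i\bullet\!\!\to j$ iff $\nu_t^i\to\nu_t^j$ for some $t$. Standing assumption: if $\nu_t^i\to\nu_t^j$ is present then so is $\nu_s^i\to\nu_u^j$ for some $s<u$. $(D,D_{t'})$ is proper if $D$ is the rolled version of $D_{t'}$ or $D_{t'}$ is the unrolled version of $D$. Node $\nu_s^i$ represents $X_s^i$. The $d$-separation Markov property holds in $D_{t'}$ if $d$-separation of node sets $a,b$ by $c$ implies conditional independence of the corresponding variables given those of $c$. *)

theory Defs
  imports "HOL-Probability.Probability"
begin

text \<open>A tailed directed graph on node set V \<union> W is given by two relations:
  E i j means i *-> j (a directed or tailed edge), T i j means i \<bullet>-> j (tailed edge).
  Since if i \<bullet>-> j is present the plain edge is omitted, E i j and \<not> T i j means a plain edge i -> j.\<close>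

definition tailed_dg :: "'n set \<Rightarrow> 'n set \<Rightarrow> ('n \<Rightarrow> 'n \<Rightarrow> bool) \<Rightarrow> ('n \<Rightarrow> 'n \<Rightarrow> bool) \<Rightarrow> bool" where
  "tailed_dg V W E T \<longleftrightarrow>
     (\<forall>i j. E i j \<longrightarrow> i \<in> V \<union> W \<and> j \<in> V \<union> W) \<and>
     (\<forall>i j. T i j \<longrightarrow> E i j) \<and>
     (\<forall>i j. E i j \<and> j \<in> W \<longrightarrow> i \<in> W \<and> T i j)"

definition tailed_an :: "('n \<Rightarrow> 'n \<Rightarrow> bool) \<Rightarrow> 'n set \<Rightarrow> 'n set" where
  "tailed_an T B = {k. \<exists>j\<in>B. T\<^sup>+\<^sup>+ k j} - B"

definition unrolled_nodes :: "'n set \<Rightarrow> 'n set \<Rightarrow> nat \<Rightarrow> ('n \<times> nat) set" where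
  "unrolled_nodes V W t' = {(i, s). i \<in> V \<and> s \<le> t'} \<union> {(i, 0) | i. i \<in> W}"

definition unroll :: "'n set \<Rightarrow> 'n set \<Rightarrow> ('n \<Rightarrow> 'n \<Rightarrow> bool) \<Rightarrow> ('n \<Rightarrow> 'n \<Rightarrow> bool) \<Rightarrow> nat
    \<Rightarrow> ('n \<times> nat) \<Rightarrow> ('n \<times> nat) \<Rightarrow> bool" where
  "unroll V W E T t' x y \<longleftrightarrow>
     x \<in> unrolled_nodes V W t' \<and> y \<in> unrolled_nodes V W t' \<and>
     ((snd x < snd y \<and> E (fst x) (fst y)) \<or> (snd x = snd y \<and> T (fst x) (fst y)))"

definition ts_dag :: "'n set \<Rightarrow> 'n set \<Rightarrow> nat \<Rightarrow> (('n \<times> nat) \<Rightarrow> ('n \<times> nat) \<Rightarrow> bool) \<Rightarrow> bool" where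
  "ts_dag V W t' G \<longleftrightarrow>
     (\<forall>x y. G x y \<longrightarrow> x \<in> unrolled_nodes V W t' \<and> y \<in> unrolled_nodes V W t' \<and> snd x \<le> snd y) \<and>
     (\<forall>x. \<not> G\<^sup>+\<^sup>+ x x)"

definition is_rolled :: "('n \<Rightarrow> 'n \<Rightarrow> bool) \<Rightarrow> ('n \<Rightarrow> 'n \<Rightarrow> bool) \<Rightarrow> (('n \<times> nat) \<Rightarrow> ('n \<times> nat) \<Rightarrow> bool) \<Rightarrow> bool" where
  "is_rolled E T G \<longleftrightarrow>
     (\<forall>i j. E i j \<longleftrightarrow> (\<exists>s t. s \<le> t \<and> G (i, s) (j, t))) \<and>
     (\<forall>i j. T i j \<longleftrightarrow> (\<exists>t. G (i, t) (j, t)))"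

definition standing_assumption :: "(('n \<times> nat) \<Rightarrow> ('n \<times> nat) \<Rightarrow> bool) \<Rightarrow> bool" where
  "standing_assumption G \<longleftrightarrow>
     (\<forall>i j t. G (i, t) (j, t) \<longrightarrow> (\<exists>s u. s < u \<and> G (i, s) (j, u)))"

definition proper_pair :: "'n set \<Rightarrow> 'n set \<Rightarrow> ('n \<Rightarrow> 'n \<Rightarrow> bool) \<Rightarrow> ('n \<Rightarrow> 'n \<Rightarrow> bool) \<Rightarrow> nat
    \<Rightarrow> (('n \<times> nat) \<Rightarrow> ('n \<times> nat) \<Rightarrow> bool) \<Rightarrow> bool" where
  "proper_pair V W E T t' G \<longleftrightarrow>
     tailed_dg V W E T \<and> ts_dag V W t' G \<and>
     ((standing_assumption G \<and> is_rolled E T G) \<or> G = unroll V W E T t')"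

definition is_path :: "('v \<Rightarrow> 'v \<Rightarrow> bool) \<Rightarrow> 'v list \<Rightarrow> bool list \<Rightarrow> bool" where
  "is_path G ns ds \<longleftrightarrow> ns \<noteq> [] \<and> distinct ns \<and> length ds = length ns - 1 \<and>
     (\<forall>k < length ds. if ds ! k then G (ns ! k) (ns ! Suc k) else G (ns ! Suc k) (ns ! k))"

definition is_collider :: "bool list \<Rightarrow> nat \<Rightarrow> bool" where
  "is_collider ds k \<longleftrightarrow> ds ! (k - 1) \<and> \<not> ds ! k"

definition anc_plus :: "('v \<Rightarrow> 'v \<Rightarrow> bool) \<Rightarrow> 'v set \<Rightarrow> 'v set" where
  "anc_plus G0 Z = {v. \<exists>z\<in>Z. G0\<^sup>*\<^sup>* v z}"

definition path_blocked :: "('v \<Rightarrow> 'v \<Rightarrow> bool) \<Rightarrow> 'v set \<Rightarrow> 'v list \<Rightarrow> bool list \<Rightarrow> bool" where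
  "path_blocked G0 Z ns ds \<longleftrightarrow>
     (\<exists>k. 0 < k \<and> k < length ns - 1 \<and>
        ((\<not> is_collider ds k \<and> ns ! k \<in> Z) \<or> (is_collider ds k \<and> ns ! k \<notin> anc_plus G0 Z)))"

definition separated :: "('v \<Rightarrow> 'v \<Rightarrow> bool) \<Rightarrow> ('v \<Rightarrow> 'v \<Rightarrow> bool) \<Rightarrow> 'v set \<Rightarrow> 'v set \<Rightarrow> 'v set \<Rightarrow> bool" where
  "separated G G0 X Y Z \<longleftrightarrow>
     (\<forall>ns ds. is_path G ns ds \<and> hd ns \<in> X \<and> last ns \<in> Y \<longrightarrow> path_blocked G0 Z ns ds)"

definition d_sep :: "('v \<Rightarrow> 'v \<Rightarrow> bool) \<Rightarrow> 'v set \<Rightarrow> 'v set \<Rightarrow> 'v set \<Rightarrow> bool" where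
  "d_sep G a b c \<longleftrightarrow> separated G G a b c"

text \<open>delta_sep E A B C: B is delta-separated from A given C in the DG E (= D^-).\<close>
definition delta_sep :: "('v \<Rightarrow> 'v \<Rightarrow> bool) \<Rightarrow> 'v set \<Rightarrow> 'v set \<Rightarrow> 'v set \<Rightarrow> bool" where
  "delta_sep E A B C \<longleftrightarrow> separated (\<lambda>i j. E i j \<and> i \<notin> B) E A B C"

definition gen_sa :: "'a measure \<Rightarrow> ('i \<Rightarrow> 'b measure) \<Rightarrow> ('i \<Rightarrow> 'a \<Rightarrow> 'b) \<Rightarrow> 'i set \<Rightarrow> 'a measure" where
  "gen_sa M N X I = sigma (space M) (\<Union>i\<in>I. {X i -` S \<inter> space M | S. S \<in> sets (N i)})"

definition cond_indep :: "'a measure \<Rightarrow> ('i \<Rightarrow> 'b measure) \<Rightarrow> ('i \<Rightarrow> 'a \<Rightarrow> 'b) \<Rightarrow> 'i set \<Rightarrow> 'i set \<Rightarrow> 'i set \<Rightarrow> bool" where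
  "cond_indep M N X I J K \<longleftrightarrow>
     (\<forall>a\<in>sets (gen_sa M N X I). \<forall>b\<in>sets (gen_sa M N X J).
        AE x in M. real_cond_exp M (gen_sa M N X K) (indicator (a \<inter> b) :: 'a \<Rightarrow> real) x =
          real_cond_exp M (gen_sa M N X K) (indicator a) x * real_cond_exp M (gen_sa M N X K) (indicator b) x)"

definition dsep_markov :: "'a measure \<Rightarrow> ('v \<Rightarrow> 'b measure) \<Rightarrow> ('v \<Rightarrow> 'a \<Rightarrow> 'b) \<Rightarrow> 'v set \<Rightarrow> ('v \<Rightarrow> 'v \<Rightarrow> bool) \<Rightarrow> bool" where
  "dsep_markov M N X Nodes G \<longleftrightarrow>
     (\<forall>a b c. a \<subseteq> Nodes \<and> b \<subseteq> Nodes \<and> c \<subseteq> Nodes \<and> a \<inter> b = {} \<and> a \<inter> c = {} \<and> b \<inter> c = {} \<and>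
        d_sep G a b c \<longrightarrow> cond_indep M N X a b c)"

definition past :: "'n set \<Rightarrow> 'n set \<Rightarrow> 'n set \<Rightarrow> nat \<Rightarrow> ('n \<times> nat) set" where
  "past V W A u = {(i, s). i \<in> A \<and> ((i \<in> V \<and> s \<le> u) \<or> (i \<in> W \<and> s = 0))}"

definition locally_indep :: "'n set \<Rightarrow> 'n set \<Rightarrow> 'a measure \<Rightarrow> ('n \<times> nat \<Rightarrow> 'b measure) \<Rightarrow> ('n \<times> nat \<Rightarrow> 'a \<Rightarrow> 'b)
    \<Rightarrow> 'n set \<Rightarrow> 'n set \<Rightarrow> 'n set \<Rightarrow> nat \<Rightarrow> bool" where
  "locally_indep V W M N X A B C t' \<longleftrightarrow>
     (\<forall>t\<in>{1..t'}. cond_indep M N X (past V W A (t - 1)) {(j, t) | j. j \<in> B} (past V W (B \<union> C) (t - 1)))"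

end

theory Submission
  imports Defs
begin

definition walk :: "('v \<Rightarrow> 'v \<Rightarrow> bool) \<Rightarrow> 'v list \<Rightarrow> bool list \<Rightarrow> bool" where
  "walk G ns ds \<longleftrightarrow> ns \<noteq> [] \<and> length ds = length ns - 1 \<and>
     (\<forall>k < length ds. if ds ! k then G (ns ! k) (ns ! Suc k) else G (ns ! Suc k) (ns ! k))"

definition conn :: "('v \<Rightarrow> 'v \<Rightarrow> bool) \<Rightarrow> 'v set \<Rightarrow> 'v list \<Rightarrow> bool list \<Rightarrow> bool" where
  "conn G0 Z ns ds \<longleftrightarrow> (\<forall>k. 0 < k \<and> k < length ns - 1 \<longrightarrow>
      (\<not> is_collider ds k \<longrightarrow> ns ! k \<notin> Z) \<and> (is_collider ds k \<longrightarrow> ns ! k \<in> anc_plus G0 Z))"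

lemma conn_iff: "conn G0 Z ns ds \<longleftrightarrow> \<not> path_blocked G0 Z ns ds"
  by (auto simp: conn_def path_blocked_def)

lemma anc_step: "G0 u v \<Longrightarrow> v \<in> anc_plus G0 Z \<Longrightarrow> u \<in> anc_plus G0 Z"
  by (auto simp: anc_plus_def intro: converse_rtranclp_into_rtranclp)

lemma chain_anc:
  assumes w: "walk G ns ds" and c: "conn G0 Z ns ds" and GG: "\<forall>x y. G x y \<longrightarrow> G0 x y"
  shows "0 < i \<Longrightarrow> ds!i \<Longrightarrow> q < length ns - 1 \<Longrightarrow> i < q \<Longrightarrow> \<not> ds!q \<Longrightarrow> ns!i \<in> anc_plus G0 Z"
proof (induction "q - i" arbitrary: i rule: less_induct)
  case less
  have e: "G0 (ns!i) (ns!Suc i)" using w less.prems GG unfolding walk_def by auto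
  show ?case
  proof (cases "ds ! Suc i")
    case False
    then have "is_collider ds (Suc i)" using less.prems by (simp add: is_collider_def)
    moreover have "0 < Suc i" "Suc i < length ns - 1" using less.prems by auto
    ultimately have "ns ! Suc i \<in> anc_plus G0 Z" using c unfolding conn_def by blast
    then show ?thesis using e anc_step by metis
  next
    case True
    then have "Suc i < q" using less.prems by (metis Suc_lessI)
    then have "ns ! Suc i \<in> anc_plus G0 Z" using less.hyps[of "Suc i"] less.prems True by auto
    then show ?thesis using e anc_step by metis
  qed
qed

lemma walk_to_path:
  assumes "walk G ns ds" "conn G0 Z ns ds" "\<forall>x y. G x y \<longrightarrow> G0 x y"
  shows "\<exists>ns' ds'. is_path G ns' ds' \<and> hd ns' = hd ns \<and> last ns' = last ns \<and> conn G0 Z ns' ds'"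
  using assms
proof (induction "length ns" arbitrary: ns ds rule: less_induct)
  case less
  show ?case
  proof (cases "distinct ns")
    case True
    then show ?thesis using less.prems unfolding is_path_def walk_def by blast
  next
    case False
    then obtain i k where ik: "i < k" "k < length ns" "ns!i = ns!k"
      by (metis distinct_conv_nth linorder_neqE_nat)
    have lds: "length ds = length ns - 1" and ne: "ns \<noteq> []" using less.prems by (auto simp: walk_def)
    define ns' where "ns' = take i ns @ drop k ns"
    define ds' where "ds' = take i ds @ drop k ds"
    have len: "length ns' = i + (length ns - k)" using ik by (simp add: ns'_def)
    have lends: "length ds' = length ns' - 1" using ik lds len by (simp add: ds'_def)
    have nsn: "\<And>l. l < length ns' \<Longrightarrow> ns'!l = (if l < i then ns!l else ns!(l - i + k))"
      using ik by (auto simp: ns'_def nth_append add.commute)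
    have dsn: "\<And>l. l < length ds' \<Longrightarrow> ds'!l = (if l < i then ds!l else ds!(l - i + k))"
      using ik lds by (auto simp: ds'_def nth_append add.commute)
    have lt: "length ns' < length ns" using len ik by simp
    have w: "walk G ns' ds'"
      unfolding walk_def
    proof (intro conjI allI impI)
      show "ns' \<noteq> []" using len ik by auto
      show "length ds' = length ns' - 1" by (fact lends)
    next
      fix l assume l: "l < length ds'"
      have W: "\<And>m. m < length ds \<Longrightarrow> (if ds ! m then G (ns ! m) (ns ! Suc m) else G (ns ! Suc m) (ns ! m))"
        using less.prems(1) by (auto simp: walk_def)
      show "if ds' ! l then G (ns' ! l) (ns' ! Suc l) else G (ns' ! Suc l) (ns' ! l)"
      proof (cases "l < i")
        case True
        have a: "ns'!l = ns!l" "ds'!l = ds!l" using True l lends nsn dsn by auto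
        have b: "ns'!Suc l = ns!Suc l"
        proof (cases "Suc l < i")
          case True then show ?thesis using nsn l lends by auto
        next
          case False then have "Suc l = i" using \<open>l < i\<close> by simp
          then show ?thesis using nsn l lends ik by auto
        qed
        show ?thesis using W[of l] a b True ik lds by auto
      next
        case False
        have a: "ns'!l = ns!(l-i+k)" "ds'!l = ds!(l-i+k)" "ns'!Suc l = ns!Suc (l-i+k)"
          using False l lends nsn dsn by (auto simp: Suc_diff_le)
        have "l - i + k < length ds" using False l lends len lds ik by auto
        then show ?thesis using W[of "l-i+k"] a by auto
      qed
    qed
    have c: "conn G0 Z ns' ds'"
      unfolding conn_def
    proof (intro allI impI)
      fix l assume l: "0 < l \<and> l < length ns' - 1"
      have C: "\<And>m. 0 < m \<Longrightarrow> m < length ns - 1 \<Longrightarrow> (\<not> is_collider ds m \<longrightarrow> ns ! m \<notin> Z) \<and> (is_collider ds m \<longrightarrow> ns ! m \<in> anc_plus G0 Z)"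
        using less.prems(2) by (auto simp: conn_def)
      show "(\<not> is_collider ds' l \<longrightarrow> ns' ! l \<notin> Z) \<and> (is_collider ds' l \<longrightarrow> ns' ! l \<in> anc_plus G0 Z)"
      proof (cases "l < i")
        case True
        have "ns'!l = ns!l" "ds'!(l-1) = ds!(l-1)" "ds'!l = ds!l" using True l lends nsn dsn by auto
        then have "is_collider ds' l = is_collider ds l" "ns'!l = ns!l" by (auto simp: is_collider_def)
        then show ?thesis using C[of l] l True ik by auto
      next
        case False
        show ?thesis
        proof (cases "l = i")
          case False
          then have li: "l > i" using \<open>\<not> l < i\<close> by simp
          have "ns'!l = ns!(l-i+k)" "ds'!(l-1) = ds!(l-1-i+k)" "ds'!l = ds!(l-i+k)" using li l lends nsn dsn by auto
          moreover have "l-1-i+k = (l-i+k) - 1" using li by simp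
          ultimately have "is_collider ds' l = is_collider ds (l-i+k)" "ns'!l = ns!(l-i+k)" by (auto simp: is_collider_def)
          then show ?thesis using C[of "l-i+k"] l li len by auto
        next
          case True
          have kl: "k < length ns - 1" using l True len ik by linarith
          have i0: "0 < i" using l True by simp
          have e: "ns'!l = ns!i" "ds'!(l-1) = ds!(i-1)" "ds'!l = ds!k" using True l lends nsn dsn ik by auto
          show ?thesis
          proof (intro conjI impI)
            assume nc: "\<not> is_collider ds' l"
            then have "\<not> ds!(i-1) \<or> ds!k" using e by (auto simp: is_collider_def)
            then show "ns'!l \<notin> Z"
            proof
              assume "\<not> ds!(i-1)"
              then have "\<not> is_collider ds i" by (simp add: is_collider_def)
              then show ?thesis using C[of i] e i0 ik kl by auto
            next
              assume "ds!k"
              then have "\<not> is_collider ds k" by (simp add: is_collider_def)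
              then show ?thesis using C[of k] e i0 ik kl by auto
            qed
          next
            assume co: "is_collider ds' l"
            then have d1: "ds!(i-1)" and d2: "\<not> ds!k" using e by (auto simp: is_collider_def)
            show "ns'!l \<in> anc_plus G0 Z"
            proof (cases "ds ! i")
              case False
              then have "is_collider ds i" using d1 by (simp add: is_collider_def)
              then show ?thesis using C[of i] e i0 ik kl by auto
            next
              case True
              have "ns!i \<in> anc_plus G0 Z"
                using chain_anc[OF less.prems(1) less.prems(2) less.prems(3) i0 True kl ik(1) d2] .
              then show ?thesis using e by simp
            qed
          qed
        qed
      qed
    qed
    have h: "hd ns' = hd ns"
    proof (cases "i = 0")
      case True then show ?thesis using ik ne by (simp add: ns'_def hd_drop_conv_nth hd_conv_nth)
    next
      case False then show ?thesis using ik ne by (simp add: ns'_def)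
    qed
    have la: "last ns' = last ns" using ik by (simp add: ns'_def)
    from less.hyps[OF lt w c less.prems(3)] h la show ?thesis by metis
  qed
qed

lemma sep_walk:
  assumes "separated G G0 X Y Z" "\<forall>x y. G x y \<longrightarrow> G0 x y" "walk G ns ds" "conn G0 Z ns ds"
    "hd ns \<in> X" "last ns \<in> Y"
  shows False
proof -
  obtain ns' ds' where "is_path G ns' ds'" "hd ns' = hd ns" "last ns' = last ns" "conn G0 Z ns' ds'"
    using walk_to_path assms(2-4) by metis
  then show False using assms(1,5,6) by (auto simp: separated_def conn_iff)
qed

lemma dir_list:
  assumes "E\<^sup>*\<^sup>* u z" "z \<in> S" "u \<notin> S"
  shows "\<exists>us. 2 \<le> length us \<and> hd us = u \<and> last us \<in> S \<and>
     (\<forall>l < length us - 1. E (us!l) (us!Suc l) \<and> us!l \<notin> S) \<and> (\<forall>l<length us. E\<^sup>*\<^sup>* u (us!l))"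
  using assms
proof (induction rule: converse_rtranclp_induct)
  case base
  then show ?case by simp
next
  case (step y v)
  show ?case
  proof (cases "v \<in> S")
    case True
    then show ?thesis using step
      by (intro exI[of _ "[y,v]"]) (auto simp: less_Suc_eq nth_Cons')
  next
    case False
    then obtain us where us: "2 \<le> length us" "hd us = v" "last us \<in> S"
      "\<forall>l < length us - 1. E (us!l) (us!Suc l) \<and> us!l \<notin> S" "\<forall>l<length us. E\<^sup>*\<^sup>* v (us!l)"
      using step by blast
    have h0: "us ! 0 = v" using us by (metis hd_conv_nth list.size(3) not_numeral_le_zero)
    have A1: "\<forall>l < length (y # us) - 1. E ((y # us) ! l) ((y # us) ! Suc l) \<and> (y # us) ! l \<notin> S"
    proof (intro allI impI)
      fix l assume l: "l < length (y # us) - 1"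
      show "E ((y # us) ! l) ((y # us) ! Suc l) \<and> (y # us) ! l \<notin> S"
      proof (cases l)
        case 0 then show ?thesis using h0 step by simp
      next
        case (Suc m) then show ?thesis using us l by auto
      qed
    qed
    have A2: "\<forall>l<length (y # us). E\<^sup>*\<^sup>* y ((y # us) ! l)"
    proof (intro allI impI)
      fix l assume l: "l < length (y # us)"
      show "E\<^sup>*\<^sup>* y ((y # us) ! l)"
      proof (cases l)
        case 0 then show ?thesis by simp
      next
        case (Suc m) then show ?thesis using us l step
          by (auto intro: converse_rtranclp_into_rtranclp)
      qed
    qed
    show ?thesis
      apply (rule exI[of _ "y # us"])
      using A1 A2 us by auto
  qed
qed

lemma core:
  fixes G :: "('n \<times> nat) \<Rightarrow> ('n \<times> nat) \<Rightarrow> bool"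
  assumes GE: "\<forall>x y. G x y \<longrightarrow> E (fst x) (fst y) \<and> snd x \<le> snd y \<and> x \<in> unrolled_nodes V W t' \<and> y \<in> unrolled_nodes V W t'"
  and GT: "\<forall>x y. G x y \<longrightarrow> snd x = snd y \<longrightarrow> T (fst x) (fst y)"
  and TE: "\<forall>i j. T i j \<longrightarrow> E i j"
  and VW: "V \<inter> W = {}" and t1: "1 \<le> t"
  and BV: "B \<subseteq> V" and AB: "A \<inter> B = {}" and AC: "A \<inter> C = {}" and BC: "B \<inter> C = {}"
  and dsep: "delta_sep E A ((tailed_an T B \<inter> V \<inter> C) \<union> B) (C - (tailed_an T B \<inter> V))"
  shows "d_sep G (past V W A (t-1)) {(j,t)|j. j\<in>B} (past V W (B\<union>C) (t-1))"
proof -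
  define H where "H = tailed_an T B"
  define B' where "B' = (H \<inter> V \<inter> C) \<union> B"
  define C'' where "C'' = C - (H \<inter> V)"
  define E' where "E' = (\<lambda>i j. E i j \<and> i \<notin> B')"
  define a where "a = past V W A (t-1)"
  define b where "b = {(j,t)|j. j\<in>B}"
  define c where "c = past V W (B\<union>C) (t-1)"
  have sep: "separated E' E A B' C''" using dsep by (simp add: delta_sep_def E'_def B'_def C''_def H_def)
  have GEn: "x \<in> unrolled_nodes V W t' \<and> y \<in> unrolled_nodes V W t'" if "G x y" for x y
    using GE that by blast
  have GEs: "snd x \<le> snd y" if "G x y" for x y
    using GE that by blast
  have GEe: "E (fst x) (fst y)" if "G x y" for x y
    using GE that by blast
  have E'E: "\<forall>x y. E' x y \<longrightarrow> E x y" by (simp add: E'_def)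
  have GrE: "E\<^sup>*\<^sup>* (fst x) (fst y)" if "G\<^sup>*\<^sup>* x y" for x y
    using that by (induction rule: rtranclp_induct) (use GE in \<open>auto intro: rtranclp.rtrancl_into_rtrancl\<close>)
  have Grs: "snd x \<le> snd y" if "G\<^sup>*\<^sup>* x y" for x y
    using that by (induction rule: rtranclp_induct) (auto dest!: GEs)
  have TrE: "E\<^sup>*\<^sup>* x y" if "T\<^sup>+\<^sup>+ x y" for x y
    using that by (induction rule: tranclp_induct) (use TE in \<open>auto intro: rtranclp.rtrancl_into_rtrancl\<close>)
  have csnd: "snd z \<le> t-1 \<and> fst z \<in> B \<union> C" if "z \<in> c" for z
    using that by (auto simp: c_def past_def)
  have unW: "fst z \<in> V" if "z \<in> unrolled_nodes V W t'" "snd z \<noteq> 0" for z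
    using that by (auto simp: unrolled_nodes_def)
  have BTH: "u \<in> B \<union> H" if "T\<^sup>*\<^sup>* u j" "j \<in> B" for u j
    using that by (auto simp: H_def tailed_an_def dest: rtranclpD)
  show ?thesis unfolding d_sep_def separated_def a_def[symmetric] b_def[symmetric] c_def[symmetric]
  proof (intro allI impI)
    fix ns ds assume P: "is_path G ns ds \<and> hd ns \<in> a \<and> last ns \<in> b"
    show "path_blocked G c ns ds"
    proof (rule ccontr)
      assume "\<not> ?thesis"
      then have cn: "conn G c ns ds" by (simp add: conn_iff)
      define n where "n = length ns - 1"
      have ne: "ns \<noteq> []" and lds: "length ds = n" using P by (auto simp: is_path_def n_def)
      have lns: "length ns = Suc n" using ne n_def by simp
      have Wk: "\<And>k. k < n \<Longrightarrow> (if ds!k then G (ns!k) (ns!Suc k) else G (ns!Suc k) (ns!k))"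
        using P lds by (auto simp: is_path_def)
      have h0: "ns!0 \<in> a" using P ne by (simp add: hd_conv_nth)
      have hn: "ns!n \<in> b" using P ne by (simp add: last_conv_nth n_def)
      have s0: "snd (ns!0) \<le> t-1" "fst (ns!0) \<in> A" using h0 by (auto simp: a_def past_def)
      have sn: "snd (ns!n) = t" "fst (ns!n) \<in> B" using hn by (auto simp: b_def)
      have n1: "n \<ge> 1"
      proof (rule ccontr)
        assume "\<not> n \<ge> 1" then have "n = 0" by simp
        then show False using s0 sn AB by auto
      qed
      have CN: "\<And>k. 0<k \<Longrightarrow> k<n \<Longrightarrow> (\<not> is_collider ds k \<longrightarrow> ns!k \<notin> c) \<and> (is_collider ds k \<longrightarrow> ns!k \<in> anc_plus G c)"
        using cn by (simp add: conn_def n_def)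
      have nodes: "ns!k \<in> unrolled_nodes V W t'" if "k \<le> n" for k
      proof (cases "k < n")
        case True then show ?thesis using Wk[of k] GEn[of "ns!k" "ns!Suc k"] GEn[of "ns!Suc k" "ns!k"] by (auto split: if_splits)
      next
        case False then have "k = Suc (n-1)" using that n1 by simp
        then show ?thesis using Wk[of "n-1"] GEn[of "ns!(n-1)" "ns!Suc (n-1)"] GEn[of "ns!Suc (n-1)" "ns!(n-1)"] n1 by (auto split: if_splits)
      qed
      have colnl: "snd (ns!k) < t" if k: "0<k" "k<n" "is_collider ds k" for k
      proof -
        obtain z where z: "z \<in> c" "G\<^sup>*\<^sup>* (ns!k) z" using CN[OF k(1,2)] k(3) by (auto simp: anc_plus_def)
        then show ?thesis using Grs[OF z(2)] csnd[OF z(1)] t1 by linarith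
      qed
      have LB0: "\<forall>k. 0<k \<longrightarrow> k \<le> n \<longrightarrow> \<not> ds!(k-1) \<longrightarrow> t \<le> snd (ns!k) \<longrightarrow> t \<le> snd (ns!0)"
      proof (intro allI)
        fix k show "0<k \<longrightarrow> k \<le> n \<longrightarrow> \<not> ds!(k-1) \<longrightarrow> t \<le> snd (ns!k) \<longrightarrow> t \<le> snd (ns!0)"
        proof (induction k)
          case 0 show ?case by simp
        next
          case (Suc k)
          show ?case
          proof (intro impI)
            assume a1: "0 < Suc k" "Suc k \<le> n" "\<not> ds!(Suc k - 1)" "t \<le> snd (ns!Suc k)"
            then have g: "G (ns!Suc k) (ns!k)" using Wk[of k] by auto
            then have tk: "t \<le> snd (ns!k)" using GEs[OF g] a1(4) by linarith
            show "t \<le> snd (ns!0)"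
            proof (cases "k = 0")
              case True with tk show ?thesis by simp
            next
              case False
              have "\<not> is_collider ds k" using colnl[of k] False a1 tk by auto
              then have "\<not> ds!(k-1)" using a1 by (simp add: is_collider_def)
              then show ?thesis using Suc.IH False a1 tk by auto
            qed
          qed
        qed
      qed
      have LF: "ds!(k-1)" if "0<k" "k \<le> n" "t \<le> snd (ns!k)" for k
      proof (rule ccontr)
        assume "\<not> ds!(k-1)"
        then have "t \<le> snd (ns!0)" using LB0 that by blast
        then show False using s0(1) t1 by linarith
      qed
      have LT0: "\<forall>k. n - k = d \<longrightarrow> k \<le> n \<longrightarrow> t \<le> snd (ns!k) \<longrightarrow> snd (ns!k) = t \<and> T\<^sup>*\<^sup>* (fst (ns!k)) (fst (ns!n))" for d
      proof (induction d)
        case 0 then show ?case using sn by auto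
      next
        case (Suc d)
        show ?case
        proof (intro allI impI)
          fix k assume k: "n - k = Suc d" "k \<le> n" "t \<le> snd (ns!k)"
          have kn: "k < n" using k by simp
          have k0: "k \<noteq> 0"
          proof
            assume "k = 0" then show False using k s0 t1 by simp
          qed
          have "ds!(k-1)" using LF k k0 by simp
          moreover have "\<not> is_collider ds k"
          proof
            assume "is_collider ds k"
            then have "snd (ns!k) < t" using colnl k0 kn by simp
            then show False using k(3) by simp
          qed
          ultimately have "ds!k" by (simp add: is_collider_def)
          then have g: "G (ns!k) (ns!Suc k)" using Wk kn by auto
          then have "t \<le> snd (ns!Suc k)" using GEs[OF g] k(3) by linarith
          then have ih: "snd (ns!Suc k) = t \<and> T\<^sup>*\<^sup>* (fst (ns!Suc k)) (fst (ns!n))" using Suc.IH k kn by auto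
          have st: "snd (ns!k) = t" using GEs[OF g] ih k(3) by linarith
          moreover have "T (fst (ns!k)) (fst (ns!Suc k))" using GT g st ih by (metis (no_types))
          ultimately show "snd (ns!k) = t \<and> T\<^sup>*\<^sup>* (fst (ns!k)) (fst (ns!n))" using ih
            by (auto intro: converse_rtranclp_into_rtranclp)
        qed
      qed
      have LH: "fst (ns!k) \<in> (B \<union> H) \<inter> V" if "k \<le> n" "t \<le> snd (ns!k)" for k
      proof -
        have "snd (ns!k) = t" "T\<^sup>*\<^sup>* (fst (ns!k)) (fst (ns!n))" using LT0 that by blast+
        then show ?thesis using BTH sn nodes[OF that(1)] unW t1 by auto
      qed
      have NC: "fst (ns!k) \<notin> C''" if k: "0<k" "k<n" "\<not> is_collider ds k" for k
      proof
        assume f: "fst (ns!k) \<in> C''"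
        have nc: "ns!k \<notin> c" using CN[OF k(1,2)] k(3) by auto
        have un: "ns!k \<in> unrolled_nodes V W t'" using nodes k by simp
        have "t \<le> snd (ns!k)"
        proof (rule ccontr)
          assume "\<not> ?thesis"
          then have "snd (ns!k) \<le> t-1" by simp
          then have "ns!k \<in> c" using un f VW
            by (cases "ns!k") (auto simp: c_def past_def unrolled_nodes_def C''_def)
          then show False using nc by simp
        qed
        then have "fst (ns!k) \<in> (B \<union> H) \<inter> V" using LH k by simp
        then show False using f BC by (auto simp: C''_def)
      qed
      have CO: "fst (ns!k) \<in> anc_plus E C'' \<union> anc_plus E B" if k: "0<k" "k<n" "is_collider ds k" for k
      proof -
        obtain z where z: "z \<in> c" "G\<^sup>*\<^sup>* (ns!k) z" using CN[OF k(1,2)] k(3) by (auto simp: anc_plus_def)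
        have e: "E\<^sup>*\<^sup>* (fst (ns!k)) (fst z)" using GrE z by blast
        have "fst z \<in> B \<union> C" using csnd z by blast
        then show ?thesis
        proof (elim UnE)
          assume "fst z \<in> B" then show ?thesis using e by (auto simp: anc_plus_def)
        next
          assume zc: "fst z \<in> C"
          show ?thesis
          proof (cases "fst z \<in> C''")
            case True then show ?thesis using e by (auto simp: anc_plus_def)
          next
            case False
            then have "fst z \<in> H" using zc by (auto simp: C''_def)
            then obtain j where j: "j \<in> B" "T\<^sup>+\<^sup>+ (fst z) j" by (auto simp: H_def tailed_an_def)
            have "E\<^sup>*\<^sup>* (fst (ns!k)) j" using rtranclp_trans[OF e TrE[OF j(2)]] .
            then show ?thesis using j(1) by (auto simp: anc_plus_def)
          qed
        qed
      qed
      define p where "p = (LEAST k. k \<le> n \<and> fst (ns!k) \<in> B')"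
      have pex: "n \<le> n \<and> fst (ns!n) \<in> B'" using sn by (simp add: B'_def)
      have p: "p \<le> n" "fst (ns!p) \<in> B'" using LeastI[of "\<lambda>k. k \<le> n \<and> fst (ns!k) \<in> B'", OF pex]
        by (simp_all add: p_def)
      have pmin: "fst (ns!k) \<notin> B'" if "k < p" for k
        using not_less_Least[of k "\<lambda>k. k \<le> n \<and> fst (ns!k) \<in> B'"] that p(1) by (simp add: p_def)
      have A_B': "A \<inter> B' = {}" using AB AC by (auto simp: B'_def)
      have p0: "0 < p" using s0 p A_B' by (cases p) auto
      have B'V: "B' \<subseteq> V \<inter> (B \<union> C)" using BV by (auto simp: B'_def)
      have dp: "ds!(p-1)"
      proof (cases "t \<le> snd (ns!p)")
        case True then show ?thesis using LF p p0 by simp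
      next
        case False
        have pn: "p < n" using False sn p by (metis le_less order_refl)
        have "ns!p \<in> c" using False p B'V by (cases "ns!p") (auto simp: c_def past_def)
        then have "is_collider ds p" using CN p0 pn by blast
        then show ?thesis by (simp add: is_collider_def)
      qed
      show False
      proof (cases "\<exists>k. 0<k \<and> k<p \<and> is_collider ds k \<and> fst (ns!k) \<notin> anc_plus E C''")
        case False
        define ws where "ws = map fst (take (Suc p) ns)"
        define vs where "vs = take p ds"
        have lw: "length ws = Suc p" using p lns by (simp add: ws_def)
        have lv: "length vs = p" using p lds by (simp add: vs_def)
        have wsn: "ws!l = fst (ns!l)" if "l \<le> p" for l using that p lns by (simp add: ws_def)
        have vsn: "vs!l = ds!l" if "l < p" for l using that by (simp add: vs_def)
        have w: "walk E' ws vs"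
          unfolding walk_def
        proof (intro conjI allI impI)
          show "ws \<noteq> []" using lw by auto
          show "length vs = length ws - 1" using lw lv by simp
        next
          fix l assume l: "l < length vs"
          then have lp: "l < p" "l < n" using lv p by auto
          show "if vs ! l then E' (ws ! l) (ws ! Suc l) else E' (ws ! Suc l) (ws ! l)"
          proof (cases "ds!l")
            case True
            have g: "G (ns!l) (ns!Suc l)" using Wk[OF lp(2)] True by simp
            show ?thesis using GEe[OF g] pmin[OF lp(1)] wsn[of l] wsn[of "Suc l"] lp vsn[of l] True
              by (simp add: E'_def)
          next
            case False
            have "Suc l < p"
            proof (rule ccontr)
              assume "\<not> Suc l < p" then have "l = p - 1" using lp by simp
              then show False using False dp by simp
            qed
            have g: "G (ns!Suc l) (ns!l)" using Wk[OF lp(2)] False by simp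
            show ?thesis using GEe[OF g] pmin[OF \<open>Suc l < p\<close>] wsn[of l] wsn[of "Suc l"] lp vsn[of l] False \<open>Suc l < p\<close>
              by (simp add: E'_def)
          qed
        qed
        have cw: "conn E C'' ws vs"
          unfolding conn_def
        proof (intro allI impI)
          fix l assume l: "0 < l \<and> l < length ws - 1"
          then have lp: "l < p" "l < n" using lw p by auto
          have "is_collider vs l = is_collider ds l" using lp l vsn by (simp add: is_collider_def)
          then show "(\<not> is_collider vs l \<longrightarrow> ws ! l \<notin> C'') \<and> (is_collider vs l \<longrightarrow> ws ! l \<in> anc_plus E C'')"
            using NC[of l] False wsn[of l] lp l by auto
        qed
        have "hd ws \<in> A" using s0 wsn[of 0] lw by (cases ws) auto
        moreover have "last ws \<in> B'" using p wsn[of p] lw by (metis diff_Suc_1 last_conv_nth list.size(3) nat.distinct(1) order_refl)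
        ultimately show False using sep_walk[OF sep E'E w cw] by blast
      next
        case True
        define q where "q = (LEAST k. 0<k \<and> k<p \<and> is_collider ds k \<and> fst (ns!k) \<notin> anc_plus E C'')"
        have q: "0<q" "q<p" "is_collider ds q" "fst (ns!q) \<notin> anc_plus E C''"
          using LeastI_ex[OF True] by (simp_all add: q_def)
        have qmin: "fst (ns!k) \<in> anc_plus E C''" if "0<k" "k<q" "is_collider ds k" for k
          using not_less_Least[of k "\<lambda>k. 0<k \<and> k<p \<and> is_collider ds k \<and> fst (ns!k) \<notin> anc_plus E C''"] that q
          by (simp add: q_def)
        have "fst (ns!q) \<in> anc_plus E B" using CO[of q] q p(1) by (meson UnE order_less_le_trans)
        then obtain z where z: "z \<in> B" "E\<^sup>*\<^sup>* (fst (ns!q)) z" by (auto simp: anc_plus_def)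
        obtain us where us: "2 \<le> length us" "hd us = fst (ns!q)" "last us \<in> B'"
          "\<forall>l<length us - 1. E (us!l) (us!Suc l) \<and> us!l \<notin> B'" "\<forall>l<length us. E\<^sup>*\<^sup>* (fst (ns!q)) (us!l)"
          using dir_list[of E "fst (ns!q)" z B'] pmin[of q] q z by (auto simp: B'_def)
        have us0: "us!0 = fst (ns!q)" using us by (metis hd_conv_nth list.size(3) not_numeral_le_zero)
        define ws where "ws = map fst (take (Suc q) ns) @ tl us"
        define vs where "vs = take q ds @ replicate (length us - 1) True"
        have lw: "length ws = q + length us" using q p lns us by (simp add: ws_def)
        have lv: "length vs = length ws - 1" using q p lds lw us(1) by (simp add: vs_def)
        have wsn: "ws!l = fst (ns!l)" if "l \<le> q" for l using that q p lns by (simp add: ws_def nth_append)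
        have wsq: "ws!l = us!(l-q)" if "q \<le> l" "l < length ws" for l
        proof (cases "l = q")
          case True then show ?thesis using wsn us0 by simp
        next
          case False
          then have "ws!l = tl us ! (l - Suc q)" using that q p lns by (simp add: ws_def nth_append)
          also have "\<dots> = us ! (l - q)" using that False us lw by (simp add: nth_tl Suc_diff_Suc)
          finally show ?thesis .
        qed
        have vsn: "vs!l = (if l < q then ds!l else True)" if "l < length vs" for l
          using that q p lds lv lw by (simp add: vs_def nth_append)
        have w: "walk E' ws vs"
          unfolding walk_def
        proof (intro conjI allI impI)
          show "ws \<noteq> []" using lw q by auto
          show "length vs = length ws - 1" by (fact lv)
        next
          fix l assume l: "l < length vs"
          show "if vs ! l then E' (ws ! l) (ws ! Suc l) else E' (ws ! Suc l) (ws ! l)"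
          proof (cases "l < q")
            case True
            then have lp: "l < p" "l < n" "Suc l \<le> q" "Suc l < p" using q p by auto
            have v: "vs!l = ds!l" using vsn[OF l] True by simp
            have w1: "ws!l = fst (ns!l)" "ws!Suc l = fst (ns!Suc l)" using wsn lp True by auto
            show ?thesis
            proof (cases "ds!l")
              case True
              have g: "G (ns!l) (ns!Suc l)" using Wk[OF lp(2)] True by simp
              show ?thesis using GEe[OF g] pmin[OF lp(1)] v w1 True by (simp add: E'_def)
            next
              case False
              have g: "G (ns!Suc l) (ns!l)" using Wk[OF lp(2)] False by simp
              show ?thesis using GEe[OF g] pmin[OF lp(4)] v w1 False by (simp add: E'_def)
            qed
          next
            case False
            have e: "vs!l" using vsn[OF l] False by simp
            have i: "l - q < length us - 1" using l lv lw False by simp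
            have "ws!l = us!(l-q)" "ws!Suc l = us!Suc (l-q)" using wsq False l lv lw by (auto simp: Suc_diff_le)
            then show ?thesis using e us(4) i by (simp add: E'_def)
          qed
        qed
        have qc: "fst (ns!q) \<notin> C''" using q(4) by (auto simp: anc_plus_def)
        have cw: "conn E C'' ws vs"
          unfolding conn_def
        proof (intro allI impI)
          fix l assume l: "0 < l \<and> l < length ws - 1"
          show "(\<not> is_collider vs l \<longrightarrow> ws ! l \<notin> C'') \<and> (is_collider vs l \<longrightarrow> ws ! l \<in> anc_plus E C'')"
          proof (cases "l < q")
            case True
            then have lp: "l < p" "l < n" using q p by auto
            have h1: "l-1 < length vs" "l - 1 < q" using True l lv by auto
            have v1: "vs!(l-1) = ds!(l-1)" using vsn[OF h1(1)] h1(2) by (simp only: if_P)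
            have v2: "vs!l = ds!l" using vsn[of l] True l lv by auto
            have "is_collider vs l = is_collider ds l" using v1 v2 by (simp add: is_collider_def)
            then show ?thesis using NC[of l] qmin[of l] wsn[of l] lp l True by auto
          next
            case False
            have nc: "\<not> is_collider vs l" using vsn[of l] l lv False by (simp add: is_collider_def)
            have "ws!l \<notin> C''"
            proof (cases "l = q")
              case True then show ?thesis using wsn qc by simp
            next
              case False
              have "ws!l = us!(l-q)" using wsq \<open>\<not> l < q\<close> l by auto
              moreover have "E\<^sup>*\<^sup>* (fst (ns!q)) (us!(l-q))" using us(5) l lw \<open>\<not> l < q\<close> by auto
              ultimately show ?thesis using q(4) by (auto simp: anc_plus_def)
            qed
            then show ?thesis using nc by simp
          qed
        qed
        have "hd ws \<in> A" using s0 wsn[of 0] lw q(1) by (cases ws) auto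
        moreover have "last ws \<in> B'"
        proof -
          have "tl us \<noteq> []" using us by (cases us) auto
          then have "last ws = last (tl us)" by (simp add: ws_def)
          also have "\<dots> = last us" using \<open>tl us \<noteq> []\<close> by (cases us) auto
          finally show ?thesis using us by simp
        qed
        ultimately show False using sep_walk[OF sep E'E w cw] by blast
      qed
    qed
  qed
qed

theorem theorem1:
  fixes V W :: "'n set" and E T :: "'n \<Rightarrow> 'n \<Rightarrow> bool"
    and G :: "('n \<times> nat) \<Rightarrow> ('n \<times> nat) \<Rightarrow> bool" and t' :: nat
    and M :: "'a measure" and N :: "'n \<times> nat \<Rightarrow> 'b measure" and X :: "'n \<times> nat \<Rightarrow> 'a \<Rightarrow> 'b"
    and A B C :: "'n set"
  assumes "finite V" and "finite W" and "V \<inter> W = {}"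
    and "t' \<ge> 1"
    and "proper_pair V W E T t' G"
    and "prob_space M"
    and "\<forall>v\<in>unrolled_nodes V W t'. X v \<in> measurable M (N v)"
    and "dsep_markov M N X (unrolled_nodes V W t') G"
    and "A \<subseteq> V \<union> W" and "C \<subseteq> V \<union> W" and "B \<subseteq> V"
    and "A \<inter> B = {}" and "A \<inter> C = {}" and "B \<inter> C = {}"
    and "A \<inter> tailed_an T B = {}"
    and "delta_sep E A ((tailed_an T B \<inter> V \<inter> C) \<union> B) (C - (tailed_an T B \<inter> V))"
  shows "locally_indep V W M N X A B C t'"
proof -
  have td: "tailed_dg V W E T" and dag: "ts_dag V W t' G"
    and alt: "(standing_assumption G \<and> is_rolled E T G) \<or> G = unroll V W E T t'"
    using assms(5) unfolding proper_pair_def by (blast, blast, blast)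
  have TE: "\<forall>i j. T i j \<longrightarrow> E i j" using td unfolding tailed_dg_def by blast
  have GE: "\<forall>x y. G x y \<longrightarrow> E (fst x) (fst y) \<and> snd x \<le> snd y \<and> x \<in> unrolled_nodes V W t' \<and> y \<in> unrolled_nodes V W t'"
  proof (intro allI impI)
    fix x y assume g: "G x y"
    have d: "snd x \<le> snd y \<and> x \<in> unrolled_nodes V W t' \<and> y \<in> unrolled_nodes V W t'"
      using dag g unfolding ts_dag_def by blast
    have "E (fst x) (fst y)" using alt
    proof
      assume "standing_assumption G \<and> is_rolled E T G"
      then have r: "\<forall>i j. E i j \<longleftrightarrow> (\<exists>s t. s \<le> t \<and> G (i,s) (j,t))" by (simp add: is_rolled_def)
      have "G (fst x, snd x) (fst y, snd y)" using g by simp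
      then have "\<exists>s t. s \<le> t \<and> G (fst x, s) (fst y, t)" using d by blast
      then show ?thesis using r by metis
    next
      assume "G = unroll V W E T t'"
      then have "unroll V W E T t' x y" using g by simp
      then show ?thesis using TE unfolding unroll_def by blast
    qed
    with d show "E (fst x) (fst y) \<and> snd x \<le> snd y \<and> x \<in> unrolled_nodes V W t' \<and> y \<in> unrolled_nodes V W t'" by simp
  qed
  have GT: "\<forall>x y. G x y \<longrightarrow> snd x = snd y \<longrightarrow> T (fst x) (fst y)"
  proof (intro allI impI)
    fix x y assume g: "G x y" and s: "snd x = snd y"
    show "T (fst x) (fst y)" using alt
    proof
      assume "standing_assumption G \<and> is_rolled E T G"
      then have r: "\<forall>i j. T i j \<longleftrightarrow> (\<exists>t. G (i,t) (j,t))" by (simp add: is_rolled_def)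
      have "G (fst x, snd x) (fst y, snd x)" using g s by (metis prod.collapse)
      then show ?thesis using r by metis
    next
      assume "G = unroll V W E T t'"
      then have "unroll V W E T t' x y" using g by simp
      then show ?thesis using s unfolding unroll_def by simp
    qed
  qed
  show ?thesis unfolding locally_indep_def
  proof
    fix t assume t: "t \<in> {1..t'}"
    have t1: "1 \<le> t" and tt: "t \<le> t'" using t by auto
    have ds: "d_sep G (past V W A (t-1)) {(j,t)|j. j\<in>B} (past V W (B\<union>C) (t-1))"
      by (rule core[OF GE GT TE assms(3) t1 assms(11) assms(12) assms(13) assms(14) assms(16)])
    have s1: "past V W A (t-1) \<subseteq> unrolled_nodes V W t'"
      using tt by (auto simp: past_def unrolled_nodes_def)
    have s2: "{(j,t)|j. j\<in>B} \<subseteq> unrolled_nodes V W t'"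
      using tt assms(11) by (auto simp: unrolled_nodes_def)
    have s3: "past V W (B\<union>C) (t-1) \<subseteq> unrolled_nodes V W t'"
      using tt by (auto simp: past_def unrolled_nodes_def)
    have d1: "past V W A (t-1) \<inter> {(j,t)|j. j\<in>B} = {}"
      using assms(12) by (auto simp: past_def)
    have d2: "past V W A (t-1) \<inter> past V W (B\<union>C) (t-1) = {}"
      using assms(12,13) by (auto simp: past_def)
    have d3: "{(j,t)|j. j\<in>B} \<inter> past V W (B\<union>C) (t-1) = {}"
      using assms(3,11) t1 by (auto simp: past_def)
    show "cond_indep M N X (past V W A (t - 1)) {(j, t) |j. j \<in> B} (past V W (B \<union> C) (t - 1))"
      using assms(8)[unfolded dsep_markov_def, rule_format, of "past V W A (t-1)" "{(j,t)|j. j\<in>B}" "past V W (B\<union>C) (t-1)"] ds s1 s2 s3 d1 d2 d3 by (simp only: Int_commute[of _ "past V W A (t-1)"] simp_thms)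
  qed
qed

end
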